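(* Let $K$ be a compact line, $Q\subseteq K$ and $(F_i)_{i\in I}$ a weak*-null family in $\mathrm{NBV}(K)$ which is of type $c_0\ell_1$ over $Q$. Then the set $\{t\in Q\cap(H\setminus H^+):(F_i(t))_{i\in I}\notin c_0(I)\}$ is countable for every closed separable subset $H$ of $K$, and moreover the set $\{t\in Q\cap H:(F_i(t))_{i\in I}\notin c_0(I)\}$ is countable for every closed separable convex subset $H$ of $K$.
   Context: A compact line is a totally ordered set which is compact in its order topology; a closed subset $H$ is a compact line with the induced order, and $H^+$ denotes its right-isolated points ($\max H$ or points having an immediate successor in $H$). A subset $H$ is convex if $t\le s$ in $H$ implies $[t,s]\subseteq H$. $\mathrm{NBV}(K)$ is the space of right-continuous real maps of bounded variation on $K$, identified with $C(K)^*$ via $F_\mu(t)=\mu([\min K,t])$. $\lim_{i\in I}a_i=0$ means $\{i:|a_i|\ge\varepsilon\}$ is finite for every $\varepsilon>0$; $c_0(I)$ is the set of such families. $(F_i)$ is weak*-null if $\lim_{i\in I}\int f\,d\mu_i=0$ for every $f\in C(K)$, $\mu_i$ associated to $F_i$. $(F_i)$ is of type $c_0\ell_1$ over $Q$ if $F_i(t)=a_{i,t}+b_{i,t}$ ($i\in I,t\in Q$) with $\lim_{i\in I}a_{i,t}=0$ for each $t\in Q$ and $\sup_i\sum_{t\in Q}|b_{i,t}|<\infty$. *)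

theory Defs
  imports "HOL-Analysis.Analysis"
begin

text \<open>A compact line is modelled as a type of class linorder_topology (order topology)
  whose universe is compact.\<close>

definition compact_line_type :: "'a::linorder_topology itself \<Rightarrow> bool" where
  "compact_line_type _ \<longleftrightarrow> compact (UNIV :: 'a set)"

definition right_isolated :: "'a::linorder set \<Rightarrow> 'a set" where
  "right_isolated H = {t \<in> H. (\<forall>s\<in>H. s \<le> t) \<or> (\<exists>s\<in>H. t < s \<and> (\<forall>u\<in>H. \<not> (t < u \<and> u < s)))}"

definition order_convex :: "'a::linorder set \<Rightarrow> bool" where
  "order_convex H \<longleftrightarrow> (\<forall>t\<in>H. \<forall>s\<in>H. t \<le> s \<longrightarrow> {t..s} \<subseteq> H)"

text \<open>lim_{i in I} a_i = 0 in the sense of the paper (membership in c_0(I)).\<close>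
definition c0_on :: "'i set \<Rightarrow> ('i \<Rightarrow> real) \<Rightarrow> bool" where
  "c0_on I a \<longleftrightarrow> (\<forall>\<epsilon>>0. finite {i\<in>I. \<epsilon> \<le> \<bar>a i\<bar>})"

definition finite_radon :: "'a::topological_space measure \<Rightarrow> bool" where
  "finite_radon M \<longleftrightarrow> sets M = sets borel \<and> emeasure M UNIV < \<infinity> \<and>
     (\<forall>A\<in>sets borel. emeasure M A = (SUP C\<in>{C. compact C \<and> C \<subseteq> A}. emeasure M C))"

text \<open>The signed Radon measure mu = Mp - Mm is associated with F : K -> R, i.e.
  F(t) = mu([min K, t]).\<close>
definition associated_measure :: "('a::linorder_topology \<Rightarrow> real) \<Rightarrow> 'a measure \<Rightarrow> 'a measure \<Rightarrow> bool" where
  "associated_measure F Mp Mm \<longleftrightarrow> finite_radon Mp \<and> finite_radon Mm \<and>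
     (\<forall>t. F t = measure Mp {..t} - measure Mm {..t})"

definition weak_star_null ::
  "'i set \<Rightarrow> ('i \<Rightarrow> 'a::linorder_topology \<Rightarrow> real) \<Rightarrow> ('i \<Rightarrow> 'a measure) \<Rightarrow> ('i \<Rightarrow> 'a measure) \<Rightarrow> bool" where
  "weak_star_null I F Mp Mm \<longleftrightarrow> (\<forall>i\<in>I. associated_measure (F i) (Mp i) (Mm i)) \<and>
     (\<forall>f::'a \<Rightarrow> real. continuous_on UNIV f \<longrightarrow>
        c0_on I (\<lambda>i. integral\<^sup>L (Mp i) f - integral\<^sup>L (Mm i) f))"

definition type_c0l1 :: "'i set \<Rightarrow> ('i \<Rightarrow> 'a \<Rightarrow> real) \<Rightarrow> 'a set \<Rightarrow> bool" where
  "type_c0l1 I F Q \<longleftrightarrow> (\<exists>a b. (\<forall>i\<in>I. \<forall>t\<in>Q. F i t = a i t + b i t) \<and>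
     (\<forall>t\<in>Q. c0_on I (\<lambda>i. a i t)) \<and>
     (\<exists>C. \<forall>i\<in>I. \<forall>T. finite T \<and> T \<subseteq> Q \<longrightarrow> (\<Sum>t\<in>T. \<bar>b i t\<bar>) \<le> C))"

end

theory Submission
  imports Defs
begin

lemma urysohn_line:
  fixes e d :: "'a::linorder_topology"
  assumes "compact (UNIV::'a set)" "e < d"
  obtains f :: "'a \<Rightarrow> real" where "continuous_on UNIV f" "\<And>x. x \<le> e \<Longrightarrow> f x = 1"
    "\<And>x. d \<le> x \<Longrightarrow> f x = 0" "\<And>x. \<bar>f x\<bar> \<le> 1"
proof -
  have H: "Hausdorff_space (euclidean::'a topology)"
    unfolding Hausdorff_space_def by (metis hausdorff disjnt_def open_openin topspace_euclidean)
  have "compact_space (euclidean::'a topology)"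
    using assms(1) by (simp add: compact_space_def compactin_euclidean_iff)
  hence N: "normal_space (euclidean::'a topology)"
    using H compact_Hausdorff_or_regular_imp_normal_space by blast
  have "disjnt {d..} {..e}" using assms(2) by (auto simp: disjnt_def)
  then obtain f where f: "continuous_map euclidean (top_of_set {0..1}) f" "f ` {d..} \<subseteq> {0}" "f ` {..e} \<subseteq> {1::real}"
    using Urysohn_lemma[OF N, of "{d..}" "{..e}" 0 1] by auto
  show ?thesis
  proof
    show "continuous_on UNIV f" using f(1)
      by (metis continuous_map_in_subtopology continuous_map_iff_continuous2 open_UNIV subtopology_UNIV)
    show "\<And>x. x \<le> e \<Longrightarrow> f x = 1" using f(3) by auto
    show "\<And>x. d \<le> x \<Longrightarrow> f x = 0" using f(2) by auto
    show "\<And>x. \<bar>f x\<bar> \<le> 1" using f(1) by (force simp: continuous_map_in_subtopology Pi_iff)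
  qed
qed

lemma urysohn_ex:
  fixes e d :: "'a::linorder_topology"
  assumes "compact (UNIV::'a set)" "e < d"
  shows "\<exists>f::'a\<Rightarrow>real. continuous_on UNIV f \<and> (\<forall>x. x \<le> e \<longrightarrow> f x = 1)
        \<and> (\<forall>x. d \<le> x \<longrightarrow> f x = 0) \<and> (\<forall>x. \<bar>f x\<bar> \<le> 1)"
proof (rule urysohn_line[OF assms])
  fix f :: "'a \<Rightarrow> real"
  assume f: "continuous_on UNIV f" "\<And>x. x \<le> e \<Longrightarrow> f x = 1" "\<And>x. d \<le> x \<Longrightarrow> f x = 0" "\<And>x. \<bar>f x\<bar> \<le> 1"
  show ?thesis
    by (rule exI[of _ f]) (simp add: f)
qed

lemma radon_finite:
  assumes "finite_radon M"
  shows "finite_measure M" "space M = UNIV" "sets M = sets borel"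
proof -
  show se: "sets M = sets borel" using assms by (simp add: finite_radon_def)
  show sp: "space M = UNIV" using sets_eq_imp_space_eq[OF se] by simp
  have "emeasure M UNIV < \<infinity>" using assms unfolding finite_radon_def by blast
  then have "emeasure M (space M) \<noteq> \<infinity>" using sp by simp
  then show "finite_measure M" by (rule finite_measureI)
qed

lemma cont_meas:
  assumes "finite_radon M" "continuous_on UNIV (f::'a::linorder_topology \<Rightarrow> real)"
  shows "f \<in> borel_measurable M"
proof -
  have "f \<in> borel_measurable borel" by (rule borel_measurable_continuous_onI[OF assms(2)])
  then show ?thesis using measurable_cong_sets[OF radon_finite(3)[OF assms(1)] refl] by blast
qed

lemma lim_integral:
  fixes t :: "'a::linorder_topology"
  assumes "finite_radon M" "\<And>n. continuous_on UNIV (s n)" "\<And>n x. \<bar>s n x\<bar> \<le> 1"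
    "\<And>x. (\<lambda>n. s n x) \<longlonglongrightarrow> indicator {..t} x"
  shows "(\<lambda>n. integral\<^sup>L M (s n)) \<longlonglongrightarrow> measure M {..t}"
proof -
  interpret finite_measure M using radon_finite[OF assms(1)] by simp
  have sp: "space M = UNIV" using radon_finite[OF assms(1)] by simp
  have mt: "{..t} \<in> sets M" using radon_finite(3)[OF assms(1)] by simp
  have "(\<lambda>n. integral\<^sup>L M (s n)) \<longlonglongrightarrow> integral\<^sup>L M (indicator {..t} :: 'a \<Rightarrow> real)"
  proof (rule integral_dominated_convergence[where w="\<lambda>_. 1"])
    show "(indicator {..t} :: 'a \<Rightarrow> real) \<in> borel_measurable M" using mt by simp
    show "\<And>n. s n \<in> borel_measurable M" using cont_meas[OF assms(1) assms(2)] by simp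
    show "integrable M (\<lambda>_. 1::real)" by simp
    show "AE x in M. (\<lambda>i. s i x) \<longlonglongrightarrow> indicator {..t} x" by (rule AE_I2) (rule assms(4))
    show "\<And>i. AE x in M. norm (s i x) \<le> 1" using assms(3) by simp
  qed
  then show ?thesis using mt by (simp add: emeasure_eq_measure)
qed

lemma zero_at_point:
  fixes t :: "'a::linorder_topology" and D :: "'a set" and fam :: "'a \<Rightarrow> 'a \<Rightarrow> 'a \<Rightarrow> real"
  assumes assoc: "associated_measure G Mp Mm"
   and famp: "\<And>e d. e < d \<Longrightarrow> continuous_on UNIV (fam e d) \<and> (\<forall>x. x \<le> e \<longrightarrow> fam e d x = 1)
        \<and> (\<forall>x. d \<le> x \<longrightarrow> fam e d x = 0) \<and> (\<forall>x. \<bar>fam e d x\<bar> \<le> 1)"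
   and zero: "\<And>e d. e\<in>D \<Longrightarrow> d\<in>D \<Longrightarrow> e<d \<Longrightarrow> integral\<^sup>L Mp (fam e d) - integral\<^sup>L Mm (fam e d) = 0"
   and cD: "countable D"
   and ex: "\<exists>d\<in>D. t<d"
   and dense: "\<And>x. t<x \<Longrightarrow> \<exists>d\<in>D. t<d \<and> d<x"
  shows "G t = 0"
proof -
  define S where "S = D \<inter> {t<..}"
  have Sne: "S \<noteq> {}" using ex by (auto simp: S_def)
  have cS: "countable S" using cD by (simp add: S_def)
  define en where "en k = from_nat_into S k" for k
  have enS: "en k \<in> S" for k using from_nat_into[OF Sne] by (simp add: en_def)
  have rng: "\<exists>k. en k = y" if "y \<in> S" for y
    using from_nat_into_surj[OF cS that] by (auto simp: en_def)
  define dn where "dn n = Min (en ` {..n})" for n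
  have dnS: "dn n \<in> S" for n
  proof -
    have "Min (en ` {..n}) \<in> en ` {..n}" by (rule Min_in) auto
    then obtain k where "Min (en ` {..n}) = en k" by blast
    then show ?thesis using enS[of k] by (simp add: dn_def)
  qed
  have dnle: "dn n \<le> en k" if "k \<le> n" for k n
    unfolding dn_def using that by (intro Min_le) auto
  have "\<exists>e\<in>D. t<e \<and> e<dn n" for n using dense dnS by (auto simp: S_def)
  then obtain ee where ee: "\<And>n. ee n \<in> D \<and> t < ee n \<and> ee n < dn n" by metis
  define s where "s n = fam (ee n) (dn n)" for n
  have sp: "continuous_on UNIV (s n) \<and> (\<forall>x. x \<le> ee n \<longrightarrow> s n x = 1)
        \<and> (\<forall>x. dn n \<le> x \<longrightarrow> s n x = 0) \<and> (\<forall>x. \<bar>s n x\<bar> \<le> 1)" for n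
    unfolding s_def using famp ee by blast
  have conv: "(\<lambda>n. s n x) \<longlonglongrightarrow> indicator {..t} x" for x
  proof (cases "x \<le> t")
    case True
    then have "s n x = 1" for n using sp ee[of n] by auto
    then show ?thesis using True by simp
  next
    case False
    then obtain d where d: "d\<in>D" "t<d" "d<x" using dense by force
    then obtain k where k: "en k = d" using rng by (auto simp: S_def)
    have "eventually (\<lambda>n. s n x = 0) sequentially"
    proof (rule eventually_sequentiallyI[of k])
      fix n assume "k \<le> n"
      then have "dn n \<le> x" using dnle[of k n] k d by auto
      then show "s n x = 0" using sp by blast
    qed
    then have "eventually (\<lambda>n. s n x = indicator {..t} x) sequentially" using False by simp
    then show ?thesis by (rule tendsto_eventually)
  qed
  have rp: "finite_radon Mp" and rm: "finite_radon Mm" and Gt: "G t = measure Mp {..t} - measure Mm {..t}"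
    using assoc by (auto simp: associated_measure_def)
  have "(\<lambda>n. integral\<^sup>L Mp (s n) - integral\<^sup>L Mm (s n)) \<longlonglongrightarrow> measure Mp {..t} - measure Mm {..t}"
    by (intro tendsto_diff lim_integral[OF rp] lim_integral[OF rm] conv) (use sp in auto)
  moreover have "(\<lambda>n. integral\<^sup>L Mp (s n) - integral\<^sup>L Mm (s n)) = (\<lambda>n. 0)"
  proof
    fix n
    have "dn n \<in> D" using dnS[of n] by (simp add: S_def)
    then show "integral\<^sup>L Mp (s n) - integral\<^sup>L Mm (s n) = 0"
      using zero ee[of n] unfolding s_def by blast
  qed
  ultimately show ?thesis using Gt LIMSEQ_unique by (metis tendsto_const)
qed

lemma dense_right:
  fixes H D :: "'a::linorder_topology set"
  assumes comp: "compact (UNIV::'a set)" and cl: "closed H" and tH: "t \<in> H"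
    and nr: "t \<notin> right_isolated H" and HD: "H \<subseteq> closure D"
  shows "\<And>x. t<x \<Longrightarrow> \<exists>d\<in>D. t<d \<and> d<x" and "\<exists>d\<in>D. t<d"
proof -
  have nm: "\<exists>s\<in>H. t < s" using nr tH by (auto simp: right_isolated_def not_le)
  have ns: "\<And>s. s\<in>H \<Longrightarrow> t < s \<Longrightarrow> \<exists>u\<in>H. t<u \<and> u<s" using nr tH by (auto simp: right_isolated_def)
  have hx: "\<exists>u\<in>H. t<u \<and> u<x" if "t<x" for x
  proof (rule ccontr)
    assume na: "\<not> ?thesis"
    let ?A = "H \<inter> {x..}"
    have "compact ?A" using compact_Int_closed[OF comp, of ?A] cl by (simp add: closed_Int)
    moreover have "?A \<noteq> {}" using nm na by (auto simp: not_less)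
    ultimately obtain s0 where s0: "s0 \<in> ?A" "\<forall>y\<in>?A. s0 \<le> y" using compact_attains_inf by blast
    then have "t < s0" using that by auto
    then obtain u where "u\<in>H" "t<u" "u<s0" using ns s0 by auto
    then show False using na s0 by (metis IntI atLeast_iff leD not_le)
  qed
  show dn: "\<exists>d\<in>D. t<d \<and> d<x" if tx: "t<x" for x
  proof -
    obtain u where u: "u\<in>H" "t<u" "u<x" using hx[OF tx] by blast
    then have "u \<in> closure D" using HD by auto
    then have "D \<inter> {t<..<x} \<noteq> {}"
      using closure_iff_nhds_not_empty[of u D] u by (meson open_greaterThanLessThan greaterThanLessThan_iff order_refl)
    then show ?thesis by auto
  qed
  show "\<exists>d\<in>D. t<d" using nm dn by blast
qed

lemma finite_b:
  fixes b :: "'a \<Rightarrow> real"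
  assumes bnd: "\<And>T. finite T \<Longrightarrow> T \<subseteq> Q \<Longrightarrow> (\<Sum>t\<in>T. \<bar>b t\<bar>) \<le> C" and dp: "0 < \<delta>"
  shows "finite {t\<in>Q. \<delta> \<le> \<bar>b t\<bar>}"
proof (rule ccontr)
  assume inf: "infinite {t\<in>Q. \<delta> \<le> \<bar>b t\<bar>}"
  define N where "N = nat (ceiling (C / \<delta>)) + 1"
  obtain T where T: "finite T" "card T = N" "T \<subseteq> {t\<in>Q. \<delta> \<le> \<bar>b t\<bar>}"
    using infinite_arbitrarily_large[OF inf] by blast
  have "real N * \<delta> \<le> (\<Sum>t\<in>T. \<bar>b t\<bar>)"
    using sum_bounded_below[of T \<delta> "\<lambda>t. \<bar>b t\<bar>"] T by auto
  also have "\<dots> \<le> C" using bnd T by auto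
  finally have "real N * \<delta> \<le> C" .
  moreover have "C / \<delta> < real N" unfolding N_def by linarith
  then have "C < real N * \<delta>" using dp by (simp add: field_simps)
  ultimately show False by linarith
qed

lemma indicator_cont:
  fixes t s :: "'a::linorder_topology"
  assumes "{..t} = {..<s}"
  shows "continuous_on UNIV (indicator {..t} :: 'a \<Rightarrow> real)"
proof -
  have o1: "open {..t}" using assms by simp
  have o2: "open (- {..t})" by (simp add: Compl_atMost)
  show ?thesis
  proof (subst continuous_on_open_vimage[OF open_UNIV], intro allI impI)
    fix B :: "real set" assume "open B"
    have "(indicator {..t} :: 'a \<Rightarrow> real) -` B \<inter> UNIV =
      (if (1::real) \<in> B then {..t} else {}) \<union> (if (0::real) \<in> B then - {..t} else {})"
      by (auto simp: indicator_def of_bool_def split: if_splits)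
    then show "open ((indicator {..t} :: 'a \<Rightarrow> real) -` B \<inter> UNIV)" using o1 o2 by auto
  qed
qed

lemma c0_cong: "(\<And>i. i \<in> I \<Longrightarrow> f i = g i) \<Longrightarrow> c0_on I f = c0_on I g"
  unfolding c0_on_def by (metis (mono_tags, lifting) Collect_cong)

lemma separable_dense:
  assumes "separable_space (subtopology euclidean H)"
  obtains D where "countable D" "D \<subseteq> H" "H \<subseteq> closure D"
  using assms unfolding separable_space_def
  by (auto simp: closure_of_subtopology euclidean_closure_of)

lemma range_sep:
  fixes H :: "'a::linorder_topology set"
  assumes "order_convex H" "t \<in> right_isolated H" 
  shows "(\<forall>s\<in>H. s \<le> t) \<or> (\<exists>s. {..t} = {..<s})"
proof -
  have "t \<in> H" using assms(2) by (simp add: right_isolated_def)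
  show ?thesis
  proof (cases "\<forall>s\<in>H. s \<le> t")
    case False
    then obtain s where s: "s\<in>H" "t<s" "\<forall>u\<in>H. \<not> (t < u \<and> u < s)"
      using assms(2) by (auto simp: right_isolated_def)
    have "{t..s} \<subseteq> H" using assms(1) s \<open>t\<in>H\<close> unfolding order_convex_def by auto
    then have "\<forall>u. \<not> (t < u \<and> u < s)" using s by (meson atLeastAtMost_iff less_imp_le subsetD)
    then have "{..t} = {..<s}" using s(2) by (auto simp: not_less)
    then show ?thesis by blast
  qed simp
qed

theorem theorem3p2:
  fixes F :: "'i \<Rightarrow> 'a::linorder_topology \<Rightarrow> real"
    and Mp Mm :: "'i \<Rightarrow> 'a measure"
    and I :: "'i set" and Q :: "'a set"
  assumes "compact_line_type TYPE('a)"
    and "weak_star_null I F Mp Mm"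
    and "type_c0l1 I F Q"
  shows "(\<forall>H. closed H \<and> separable_space (subtopology euclidean H) \<longrightarrow>
            countable {t \<in> Q \<inter> (H - right_isolated H). \<not> c0_on I (\<lambda>i. F i t)})
       \<and> (\<forall>H. closed H \<and> separable_space (subtopology euclidean H) \<and> order_convex H \<longrightarrow>
            countable {t \<in> Q \<inter> H. \<not> c0_on I (\<lambda>i. F i t)})"
proof -
  have comp: "compact (UNIV::'a set)" using assms(1) by (simp add: compact_line_type_def)
  have W: "(\<forall>i\<in>I. associated_measure (F i) (Mp i) (Mm i)) \<and>
     (\<forall>f::'a \<Rightarrow> real. continuous_on UNIV f \<longrightarrow>
        c0_on I (\<lambda>i. integral\<^sup>L (Mp i) f - integral\<^sup>L (Mm i) f))"
    using assms(2) unfolding weak_star_null_def .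
  have assoc: "\<And>i. i\<in>I \<Longrightarrow> associated_measure (F i) (Mp i) (Mm i)"
    using conjunct1[OF W] by (rule bspec)
  have wsn: "\<And>f. continuous_on UNIV f \<Longrightarrow> c0_on I (\<lambda>i. integral\<^sup>L (Mp i) f - integral\<^sup>L (Mm i) f)"
  proof -
    fix f :: "'a \<Rightarrow> real" assume c: "continuous_on UNIV f"
    from conjunct2[OF W] have "continuous_on UNIV f \<longrightarrow> c0_on I (\<lambda>i. integral\<^sup>L (Mp i) f - integral\<^sup>L (Mm i) f)"
      by (rule spec)
    then show "c0_on I (\<lambda>i. integral\<^sup>L (Mp i) f - integral\<^sup>L (Mm i) f)" using c by (rule mp)
  qed
  have "\<exists>a b. (\<forall>i\<in>I. \<forall>t\<in>Q. F i t = a i t + b i t) \<and>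
     (\<forall>t\<in>Q. c0_on I (\<lambda>i. a i t)) \<and>
     (\<exists>C. \<forall>i\<in>I. \<forall>T. finite T \<and> T \<subseteq> Q \<longrightarrow> (\<Sum>t\<in>T. \<bar>b i t\<bar>) \<le> C)"
    using assms(3) unfolding type_c0l1_def .
  then obtain a b where abH: "(\<forall>i\<in>I. \<forall>t\<in>Q. F i t = a i t + b i t) \<and>
     (\<forall>t\<in>Q. c0_on I (\<lambda>i. a i t)) \<and>
     (\<exists>C. \<forall>i\<in>I. \<forall>T. finite T \<and> T \<subseteq> Q \<longrightarrow> (\<Sum>t\<in>T. \<bar>b i t\<bar>) \<le> C)"
    by (elim exE)
  have ab: "\<forall>i\<in>I. \<forall>t\<in>Q. F i t = a i t + b i t" using abH by (rule conjunct1)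
  have ac0: "\<forall>t\<in>Q. c0_on I (\<lambda>i. a i t)" using conjunct1[OF conjunct2[OF abH]] .
  obtain C where bC: "\<forall>i\<in>I. \<forall>T. finite T \<and> T \<subseteq> Q \<longrightarrow> (\<Sum>t\<in>T. \<bar>b i t\<bar>) \<le> C"
    using conjunct2[OF conjunct2[OF abH]] by (elim exE)
  define P where "P e d f \<longleftrightarrow> continuous_on UNIV f \<and> (\<forall>x. x \<le> e \<longrightarrow> f x = (1::real))
        \<and> (\<forall>x. d \<le> x \<longrightarrow> f x = 0) \<and> (\<forall>x. \<bar>f x\<bar> \<le> 1)" for e d :: 'a and f
  define fam where "fam e d = (SOME f. P e d f)" for e d
  have famp: "continuous_on UNIV (fam e d) \<and> (\<forall>x. x \<le> e \<longrightarrow> fam e d x = 1)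
        \<and> (\<forall>x. d \<le> x \<longrightarrow> fam e d x = 0) \<and> (\<forall>x. \<bar>fam e d x\<bar> \<le> 1)" if ed: "e < d" for e d
  proof -
    have "\<exists>f. P e d f" unfolding P_def by (rule urysohn_ex[OF comp ed])
    then have "P e d (fam e d)" unfolding fam_def by (rule someI_ex)
    then show ?thesis unfolding P_def .
  qed
  have bad_sub: "\<exists>i\<in>J\<inter>I. \<exists>m. inverse (real (Suc m)) \<le> \<bar>b i t\<bar>"
    if tQ: "t\<in>Q" and nc: "\<not> c0_on I (\<lambda>i. F i t)" and zJ: "\<And>i. i\<in>I \<Longrightarrow> i\<notin>J \<Longrightarrow> F i t = 0" for t J
  proof -
    obtain \<epsilon> where ep: "\<epsilon> > 0" "infinite {i\<in>I. \<epsilon> \<le> \<bar>F i t\<bar>}" using nc unfolding c0_on_def by blast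
    have "c0_on I (\<lambda>i. a i t)" using ac0 tQ by blast
    then have A: "\<forall>\<delta>>0. finite {i\<in>I. \<delta> \<le> \<bar>a i t\<bar>}" unfolding c0_on_def .
    have h: "\<epsilon>/2 > 0" using ep(1) by simp
    have "finite {i\<in>I. \<epsilon>/2 \<le> \<bar>a i t\<bar>}" using spec[OF A, of "\<epsilon>/2"] h by (rule mp)
    then have "infinite ({i\<in>I. \<epsilon> \<le> \<bar>F i t\<bar>} - {i\<in>I. \<epsilon>/2 \<le> \<bar>a i t\<bar>})" using ep(2) by (rule Diff_infinite_finite)
    then have "({i\<in>I. \<epsilon> \<le> \<bar>F i t\<bar>} - {i\<in>I. \<epsilon>/2 \<le> \<bar>a i t\<bar>}) \<noteq> {}" by (rule infinite_imp_nonempty)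
    then obtain i where "i \<in> {i\<in>I. \<epsilon> \<le> \<bar>F i t\<bar>} - {i\<in>I. \<epsilon>/2 \<le> \<bar>a i t\<bar>}" by blast
    then have i: "i\<in>I" "\<epsilon> \<le> \<bar>F i t\<bar>" "\<bar>a i t\<bar> < \<epsilon>/2" by auto
    have "F i t \<noteq> 0" using i(2) ep(1) by auto
    then have "i \<in> J" using zJ[OF i(1)] by blast
    have "F i t = a i t + b i t" using ab i(1) tQ by blast
    then have "\<epsilon>/2 < \<bar>b i t\<bar>" using i by arith
    then have "0 < \<bar>b i t\<bar>" using ep(1) by linarith
    then obtain n where n: "n > 0" "inverse (real n) < \<bar>b i t\<bar>" using ex_inverse_of_nat_less by blast
    then have "inverse (real (Suc (n - 1))) \<le> \<bar>b i t\<bar>" by simp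
    then show ?thesis using \<open>i\<in>J\<close> i(1) by blast
  qed
  have cnt_b: "countable {t\<in>Q. \<exists>i\<in>J\<inter>I. \<exists>m. inverse (real (Suc m)) \<le> \<bar>b i t\<bar>}" if "countable J" for J
  proof -
    have "{t\<in>Q. \<exists>i\<in>J\<inter>I. \<exists>m. inverse (real (Suc m)) \<le> \<bar>b i t\<bar>}
        = (\<Union>i\<in>J\<inter>I. \<Union>m. {t\<in>Q. inverse (real (Suc m)) \<le> \<bar>b i t\<bar>})" by blast
    moreover have "finite {t\<in>Q. inverse (real (Suc m)) \<le> \<bar>b i t\<bar>}" if "i \<in> I" for i m
      by (rule finite_b) (use bC that in auto)
    moreover have "countable (\<Union>i\<in>J\<inter>I. \<Union>m. {t\<in>Q. inverse (real (Suc m)) \<le> \<bar>b i t\<bar>})"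
    proof (rule countable_UN)
      show "countable (J \<inter> I)" using \<open>countable J\<close> by simp
      fix i assume "i \<in> J \<inter> I"
      then have iI: "i \<in> I" by simp
      show "countable (\<Union>m. {t\<in>Q. inverse (real (Suc m)) \<le> \<bar>b i t\<bar>})"
        by (rule countable_UN[OF countableI_type], rule countable_finite, rule finite_b) (use bC iI in auto)
    qed
    ultimately show ?thesis by simp
  qed
  have part1: "countable {t \<in> Q \<inter> (H - right_isolated H). \<not> c0_on I (\<lambda>i. F i t)}"
    if clH: "closed H" and sepH: "separable_space (subtopology euclidean H)" for H
  proof -
    obtain D where D: "countable D" "D \<subseteq> H" "H \<subseteq> closure D" using separable_dense[OF sepH] by blast
    define dif where "dif i f = integral\<^sup>L (Mp i) f - integral\<^sup>L (Mm i) f" for i and f :: "'a \<Rightarrow> real"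
    define I0 where "I0 = {i\<in>I. \<exists>e\<in>D. \<exists>d\<in>D. e<d \<and> dif i (fam e d) \<noteq> 0}"
    have "I0 \<subseteq> (\<Union>p\<in>{p\<in>D\<times>D. fst p < snd p}. \<Union>m. {i\<in>I. inverse (real (Suc m)) \<le> \<bar>dif i (fam (fst p) (snd p))\<bar>})"
    proof
      fix i assume "i \<in> I0"
      then obtain e d where ed: "i\<in>I" "e\<in>D" "d\<in>D" "e<d" "dif i (fam e d) \<noteq> 0" unfolding I0_def by blast
      then obtain n where n: "n > 0" "inverse (real n) < \<bar>dif i (fam e d)\<bar>"
        using ex_inverse_of_nat_less[of "\<bar>dif i (fam e d)\<bar>"] by auto
      then have "inverse (real (Suc (n - 1))) \<le> \<bar>dif i (fam e d)\<bar>" by simp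
      then show "i \<in> (\<Union>p\<in>{p\<in>D\<times>D. fst p < snd p}. \<Union>m. {i\<in>I. inverse (real (Suc m)) \<le> \<bar>dif i (fam (fst p) (snd p))\<bar>})"
        using ed by force
    qed
    moreover have "countable (\<Union>p\<in>{p\<in>D\<times>D. fst p < snd p}. \<Union>m. {i\<in>I. inverse (real (Suc m)) \<le> \<bar>dif i (fam (fst p) (snd p))\<bar>})"
    proof (rule countable_UN)
      show "countable {p\<in>D\<times>D. fst p < snd p}" using D(1) by simp
      fix p assume "p \<in> {p\<in>D\<times>D. fst p < snd p}"
      then have c: "continuous_on UNIV (fam (fst p) (snd p))" using famp by auto
      show "countable (\<Union>m. {i\<in>I. inverse (real (Suc m)) \<le> \<bar>dif i (fam (fst p) (snd p))\<bar>})"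
      proof (rule countable_UN[OF countableI_type], rule countable_finite)
        fix m
        show "finite {i\<in>I. inverse (real (Suc m)) \<le> \<bar>dif i (fam (fst p) (snd p))\<bar>}"
          using wsn[OF c] unfolding c0_on_def dif_def by simp
      qed
    qed
    ultimately have cI0: "countable I0" by (rule countable_subset)
    have "{t \<in> Q \<inter> (H - right_isolated H). \<not> c0_on I (\<lambda>i. F i t)} \<subseteq>
          {t\<in>Q. \<exists>i\<in>I0\<inter>I. \<exists>m. inverse (real (Suc m)) \<le> \<bar>b i t\<bar>}"
    proof
      fix t assume t: "t \<in> {t \<in> Q \<inter> (H - right_isolated H). \<not> c0_on I (\<lambda>i. F i t)}"
      have z: "F i t = 0" if "i\<in>I" "i\<notin>I0" for i
      proof (rule zero_at_point[where D=D and fam=fam])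
        show "associated_measure (F i) (Mp i) (Mm i)" using assoc that(1) .
        show "\<And>e d. e < d \<Longrightarrow> continuous_on UNIV (fam e d) \<and> (\<forall>x. x \<le> e \<longrightarrow> fam e d x = 1)
          \<and> (\<forall>x. d \<le> x \<longrightarrow> fam e d x = 0) \<and> (\<forall>x. \<bar>fam e d x\<bar> \<le> 1)" by (rule famp)
        show "\<And>e d. e\<in>D \<Longrightarrow> d\<in>D \<Longrightarrow> e<d \<Longrightarrow> integral\<^sup>L (Mp i) (fam e d) - integral\<^sup>L (Mm i) (fam e d) = 0"
          using that unfolding I0_def dif_def by auto
        show "countable D" by (rule D(1))
        show "\<exists>d\<in>D. t<d" "\<And>x. t<x \<Longrightarrow> \<exists>d\<in>D. t<d \<and> d<x"
          using dense_right[OF comp clH _ _ D(3), of t] t by auto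
      qed
      show "t \<in> {t\<in>Q. \<exists>i\<in>I0\<inter>I. \<exists>m. inverse (real (Suc m)) \<le> \<bar>b i t\<bar>}"
        using bad_sub[of t I0] t z by auto
    qed
    then show ?thesis using cnt_b[OF cI0] countable_subset by blast
  qed
  have part2: "countable {t \<in> Q \<inter> H. \<not> c0_on I (\<lambda>i. F i t)}"
    if clH: "closed H" and sepH: "separable_space (subtopology euclidean H)" and cv: "order_convex H" for H
  proof -
    have "{t \<in> Q \<inter> H. \<not> c0_on I (\<lambda>i. F i t)} \<subseteq>
       {t \<in> Q \<inter> (H - right_isolated H). \<not> c0_on I (\<lambda>i. F i t)} \<union> {t\<in>H. \<forall>s\<in>H. s \<le> t}"
    proof
      fix t assume t: "t \<in> {t \<in> Q \<inter> H. \<not> c0_on I (\<lambda>i. F i t)}"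
      show "t \<in> {t \<in> Q \<inter> (H - right_isolated H). \<not> c0_on I (\<lambda>i. F i t)} \<union> {t\<in>H. \<forall>s\<in>H. s \<le> t}"
      proof (cases "t \<in> right_isolated H")
        case True
        show ?thesis
        proof (cases "\<forall>s\<in>H. s \<le> t")
          case False
          then obtain s where s: "{..t} = {..<s}" using range_sep[OF cv True] by blast
          have ic: "continuous_on UNIV (indicator {..t} :: 'a \<Rightarrow> real)" by (rule indicator_cont[OF s])
          have "c0_on I (\<lambda>i. F i t)"
          proof -
            have "integral\<^sup>L (Mp i) (indicator {..t}) - integral\<^sup>L (Mm i) (indicator {..t}) = F i t"
              if "i\<in>I" for i
            proof -
              have rp: "finite_radon (Mp i)" and rm: "finite_radon (Mm i)" and Fi: "F i t = measure (Mp i) {..t} - measure (Mm i) {..t}"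
                using assoc[OF that] by (auto simp: associated_measure_def)
              interpret p: finite_measure "Mp i" using radon_finite[OF rp] by simp
              interpret m: finite_measure "Mm i" using radon_finite[OF rm] by simp
              have "{..t} \<in> sets (Mp i)" "{..t} \<in> sets (Mm i)" using radon_finite(3)[OF rp] radon_finite(3)[OF rm] by auto
              then show ?thesis using Fi by (simp add: p.emeasure_eq_measure m.emeasure_eq_measure)
            qed
            then show ?thesis using wsn[OF ic] c0_cong by (metis (no_types, lifting))
          qed
          then show ?thesis using t by auto
        qed (use t in auto)
      qed (use t in auto)
    qed
    moreover have "finite {t\<in>H. \<forall>s\<in>H. s \<le> t}"
    proof (rule finite_subset[of _ "{THE t. t\<in>H \<and> (\<forall>s\<in>H. s \<le> t)}"])
      show "{t\<in>H. \<forall>s\<in>H. s \<le> t} \<subseteq> {THE t. t\<in>H \<and> (\<forall>s\<in>H. s \<le> t)}"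
      proof
        fix t assume t: "t \<in> {t\<in>H. \<forall>s\<in>H. s \<le> t}"
        then have "(THE t. t\<in>H \<and> (\<forall>s\<in>H. s \<le> t)) = t"
          by (intro the_equality) (auto intro: order.antisym)
        then show "t \<in> {THE t. t\<in>H \<and> (\<forall>s\<in>H. s \<le> t)}" by simp
      qed
    qed simp
    ultimately show ?thesis using part1[OF clH sepH]
      by (meson countable_Un countable_finite countable_subset)
  qed
  show ?thesis using part1 part2 by blast
qed
end
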